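(* Let $\langle \mathbb{P}_\beta : \beta \le \alpha \rangle$ be a suitable mixed support forcing iteration with $\alpha<\omega_3$, based on $\langle \dot S_\gamma : \gamma\in\alpha\cap\mathrm{odd}\rangle$. Let $\beta\le\alpha$ and $p,q\in\mathbb{P}_\beta$ with $q\le^{*,s}_\beta p$. Then: (1) $p\upharpoonright\mathrm{even}=q\upharpoonright\mathrm{even}$; (2) $\mathrm{dom}(p)\subseteq\mathrm{dom}(q)$; (3) for every odd $\gamma\in\mathrm{dom}(p)$, $p\upharpoonright(\gamma\cap\mathrm{even})$ forces in $\mathbb{P}^c_\gamma$ that one of $p(\gamma)$ and $q(\gamma)$ is an end-extension of the other.
   Context: "even"/"odd" are the classes of even/odd ordinals; $\mathrm{Add}(\omega)$ is Cohen forcing; $\omega_2$ means $\omega_2$ of the ground model. Let $\alpha \le \omega_3$. A sequence of forcing posets $\langle \mathbb{P}_\beta : \beta \le \alpha\rangle$ with a sequence $\langle \dot S_\gamma : \gamma \in \alpha\cap\mathrm{odd}\rangle$ of nice $\mathbb{P}_\gamma$-names for subsets of $\omega_2 \cap \mathrm{cof}(\omega)$ is a suitable mixed support forcing iteration of length $\alpha$ based on these names if every member of each $\mathbb{P}_\beta$ is a function with domain $\subseteq\beta$ and, with $\mathbb{P}_\beta^c := \{p \in \mathbb{P}_\beta : \mathrm{dom}(p) \subseteq \mathrm{even}\}$: (1) $\mathbb{P}_0 = \{\emptyset\}$; (2) for even $\gamma<\alpha$, $p \in \mathbb{P}_{\gamma+1}$ iff $p$ is a function, $\mathrm{dom}(p)\subseteq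 \gamma+1$, $p\upharpoonright\gamma \in \mathbb{P}_\gamma$, and if $\gamma \in \mathrm{dom}(p)$ then $p(\gamma)\in \mathrm{Add}(\omega)$; (3) for odd $\gamma<\alpha$, $p\in\mathbb{P}_{\gamma+1}$ iff $p$ is a function, $\mathrm{dom}(p)\subseteq\gamma+1$, $p\upharpoonright\gamma\in\mathbb{P}_\gamma$, and if $\gamma\in\mathrm{dom}(p)$ then $p(\gamma)$ is a nice $\mathbb{P}^c_\gamma$-name for a nonempty closed bounded subset of $\omega_2$ with $p\upharpoonright\gamma \Vdash_{\mathbb{P}_\gamma} p(\gamma)\cap \dot S_\gamma = \emptyset$; (4) for limit $\delta \le\alpha$, $p\in\mathbb{P}_\delta$ iff $p$ is a function, $\mathrm{dom}(p)\subseteq\delta$, $|\mathrm{dom}(p)\cap\mathrm{even}|<\omega$, $|\mathrm{dom}(p)\cap\mathrm{odd}|<\omega_2$, and $p\upharpoonright\beta\in\mathbb{P}_\beta$ for all $\beta<\delta$; (5) $q\le_\beta p$ iff $\mathrm{dom}(p)\subseteq\mathrm{dom}(q)$, $p(\gamma)\subseteq q(\gamma)$ for even $\gamma\in\mathrm{dom}(p)$, and for odd $\gamma\in\mathrm{dom}(p)$, $q\upharpoonright(\gamma\cap\mathrm{even})\Vdash_{\mathbb{P}^c_\gamma}$ "$q(\gamma)$ end-extends $p(\gamma)$". $q\le^*_\beta p$ iff $q\le_\beta p$ and $q\upharpoonright\mathrm{even}=p\upharpoonright\mathrm{even}$; $\mathbb{P}^*_\beta := (\mathbb{P}_\beta,\le^*_\beta)$.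 $q\le^{*,s}_\beta p$ iff every $r\le^*_\beta q$ is compatible with $p$ in $\mathbb{P}^*_\beta$. For $\gamma\notin\mathrm{dom}(p)$, $p(\gamma)$ means $\emptyset$. *)

theory Defs
  imports Main
begin

section \<open>Ordinals: a well-ordered type 'o whose elements stand for ordinals\<close>

definition lim0 :: "'o::wellorder \<Rightarrow> bool" where
  "lim0 \<xi> \<longleftrightarrow> \<not> (\<exists>\<eta>. \<eta> < \<xi> \<and> \<not> (\<exists>x. \<eta> < x \<and> x < \<xi>))"

definition is_limit :: "'o::wellorder \<Rightarrow> bool" where
  "is_limit \<xi> \<longleftrightarrow> lim0 \<xi> \<and> (\<exists>\<eta>. \<eta> < \<xi>)"

definition succ_of :: "'o::wellorder \<Rightarrow> 'o \<Rightarrow> bool" where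
  "succ_of \<gamma> \<beta> \<longleftrightarrow> \<gamma> < \<beta> \<and> \<not> (\<exists>x. \<gamma> < x \<and> x < \<beta>)"

definition even_ord :: "'o::wellorder \<Rightarrow> bool" where
  "even_ord \<xi> \<longleftrightarrow> (\<exists>l. l \<le> \<xi> \<and> lim0 l \<and> finite {\<eta>. l \<le> \<eta> \<and> \<eta> < \<xi>}
                        \<and> even (card {\<eta>. l \<le> \<eta> \<and> \<eta> < \<xi>}))"
  \<comment> \<open>\<xi> = \<lambda> + 2n with \<lambda> zero or limit\<close>

definition odd_ord :: "'o::wellorder \<Rightarrow> bool" where
  "odd_ord \<xi> \<longleftrightarrow> \<not> even_ord \<xi>"

definition cof_omega :: "'o::wellorder \<Rightarrow> bool" where
  "cof_omega \<xi> \<longleftrightarrow> (\<exists>f :: nat \<Rightarrow> 'o. strict_mono f \<and> (\<forall>n. f n < \<xi>) \<and> (\<forall>\<eta>. \<eta> < \<xi> \<longrightarrow> (\<exists>n. \<eta> < f n)))"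

definition ord_rel :: "'o::wellorder set \<Rightarrow> 'o rel" where
  "ord_rel A = Restr {(x, y). x \<le> y} A"

text \<open>om is (the ordinal) omega_2, resp. omega_3: the ordinals below it have order type aleph_2, resp. aleph_3.\<close>
definition is_omega2 :: "'o::wellorder \<Rightarrow> bool" where
  "is_omega2 om \<longleftrightarrow> (ord_rel {\<eta>. \<eta> < om}, cardSuc (cardSuc natLeq)) \<in> ordIso"

definition is_omega3 :: "'o::wellorder \<Rightarrow> bool" where
  "is_omega3 om \<longleftrightarrow> (ord_rel {\<eta>. \<eta> < om}, cardSuc (cardSuc (cardSuc natLeq))) \<in> ordIso"

section \<open>Forcing over an abstract poset (X, le), for formulas about nice names for sets of ordinals\<close>

datatype ('o, 'c) fm =
    Ground bool
  | Mem 'o "'o \<Rightarrow> 'c set"    \<comment> \<open>\<xi>\<check> \<in> nice name n, where n \<xi> is the antichain for \<xi>\<close>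
  | Neg "('o, 'c) fm"
  | Conj "('o, 'c) fm" "('o, 'c) fm"
  | All "'o \<Rightarrow> ('o, 'c) fm"     \<comment> \<open>quantifier over (ground) ordinals\<close>

primrec forces :: "'c set \<Rightarrow> ('c \<Rightarrow> 'c \<Rightarrow> bool) \<Rightarrow> ('o, 'c) fm \<Rightarrow> 'c \<Rightarrow> bool" where
  "forces X le (Ground b) p = b"
| "forces X le (Mem \<xi> n) p =
     (\<forall>r\<in>X. le r p \<longrightarrow> (\<exists>s\<in>X. le s r \<and> (\<exists>a\<in>n \<xi>. le s a)))"
| "forces X le (Neg \<phi>) p = (\<forall>r\<in>X. le r p \<longrightarrow> \<not> forces X le \<phi> r)"
| "forces X le (Conj \<phi> \<psi>) p = (forces X le \<phi> p \<and> forces X le \<psi> p)"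
| "forces X le (All f) p = (\<forall>\<xi>. forces X le (f \<xi>) p)"

definition Imp :: "('o, 'c) fm \<Rightarrow> ('o, 'c) fm \<Rightarrow> ('o, 'c) fm" where
  "Imp \<phi> \<psi> = Neg (Conj \<phi> (Neg \<psi>))"

definition Disj :: "('o, 'c) fm \<Rightarrow> ('o, 'c) fm \<Rightarrow> ('o, 'c) fm" where
  "Disj \<phi> \<psi> = Neg (Conj (Neg \<phi>) (Neg \<psi>))"

definition Ex :: "('o \<Rightarrow> ('o, 'c) fm) \<Rightarrow> ('o, 'c) fm" where
  "Ex f = Neg (All (\<lambda>x. Neg (f x)))"

definition endext :: "('o \<Rightarrow> 'c set) \<Rightarrow> ('o \<Rightarrow> 'c set) \<Rightarrow> ('o::wellorder, 'c) fm" where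
  "endext a b =
     Conj (All (\<lambda>\<xi>. Imp (Mem \<xi> a) (Mem \<xi> b)))
          (All (\<lambda>\<xi>. All (\<lambda>\<zeta>. Imp (Conj (Mem \<xi> b) (Conj (Neg (Mem \<xi> a)) (Mem \<zeta> a)))
                                  (Ground (\<zeta> < \<xi>)))))"

text \<open>"a is a nonempty closed bounded subset of om2"\<close>
definition cbs :: "'o \<Rightarrow> ('o \<Rightarrow> 'c set) \<Rightarrow> ('o::wellorder, 'c) fm" where
  "cbs om2 a =
     Conj (All (\<lambda>\<xi>. Imp (Mem \<xi> a) (Ground (\<xi> < om2))))
    (Conj (Ex (\<lambda>\<xi>. Mem \<xi> a))
    (Conj (Ex (\<lambda>\<eta>. Conj (Ground (\<eta> < om2)) (All (\<lambda>\<xi>. Imp (Mem \<xi> a) (Ground (\<xi> < \<eta>))))))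
          (All (\<lambda>\<delta>. Imp (Conj (Ground (is_limit \<delta> \<and> \<delta> < om2))
                               (All (\<lambda>\<zeta>. Imp (Ground (\<zeta> < \<delta>))
                                   (Ex (\<lambda>\<xi>. Conj (Mem \<xi> a) (Ground (\<zeta> \<le> \<xi> \<and> \<xi> < \<delta>)))))))
                         (Mem \<delta> a)))))"

definition disjoint_fm :: "('o \<Rightarrow> 'c set) \<Rightarrow> ('o \<Rightarrow> 'c set) \<Rightarrow> ('o, 'c) fm" where
  "disjoint_fm a b = All (\<lambda>\<xi>. Neg (Conj (Mem \<xi> a) (Mem \<xi> b)))"

definition antichain :: "'c set \<Rightarrow> ('c \<Rightarrow> 'c \<Rightarrow> bool) \<Rightarrow> 'c set \<Rightarrow> bool" where
  "antichain X le A \<longleftrightarrow> A \<subseteq> X \<and>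
     (\<forall>a\<in>A. \<forall>b\<in>A. a \<noteq> b \<longrightarrow> \<not> (\<exists>s\<in>X. le s a \<and> le s b))"

definition nice_name :: "'c set \<Rightarrow> ('c \<Rightarrow> 'c \<Rightarrow> bool) \<Rightarrow> 'o set \<Rightarrow> ('o \<Rightarrow> 'c set) \<Rightarrow> bool" where
  "nice_name X le D n \<longleftrightarrow> (\<forall>\<xi>. antichain X le (n \<xi>) \<and> (n \<xi> \<noteq> {} \<longrightarrow> \<xi> \<in> D))"

text \<open>Conditions of P^c (domain of even ordinals, Cohen values) are represented as 'o cc.
  Cohen conditions: finite partial functions nat \<rightharpoonup> bool.\<close>
type_synonym 'o cc = "'o \<rightharpoonup> (nat \<rightharpoonup> bool)"

datatype 'o val = Cohen "nat \<rightharpoonup> bool" | Club "'o \<Rightarrow> 'o cc set"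

type_synonym 'o cond = "'o \<rightharpoonup> 'o val"

definition emb :: "'o cc \<Rightarrow> 'o cond" where
  "emb c = (\<lambda>\<delta>. map_option Cohen (c \<delta>))"

definition embname :: "('o \<Rightarrow> 'o cc set) \<Rightarrow> ('o \<Rightarrow> 'o cond set)" where
  "embname n = (\<lambda>\<xi>. emb ` n \<xi>)"

text \<open>p(\<gamma>), with p(\<gamma>) = \<emptyset> for \<gamma> \<notin> dom p\<close>
definition coh :: "'o cond \<Rightarrow> 'o \<Rightarrow> (nat \<rightharpoonup> bool)" where
  "coh p \<gamma> = (case p \<gamma> of Some (Cohen c) \<Rightarrow> c | _ \<Rightarrow> Map.empty)"

definition nm :: "'o cond \<Rightarrow> 'o \<Rightarrow> ('o \<Rightarrow> 'o cc set)" where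
  "nm p \<gamma> = (case p \<gamma> of Some (Club n) \<Rightarrow> n | _ \<Rightarrow> (\<lambda>_. {}))"

definition cres :: "'o cond \<Rightarrow> 'o::wellorder \<Rightarrow> 'o cc" where
  "cres p \<gamma> = (\<lambda>\<delta>. if \<delta> < \<gamma> \<and> even_ord \<delta>
                     then (case p \<delta> of Some (Cohen c) \<Rightarrow> Some c | _ \<Rightarrow> None) else None)"

definition evres :: "'o::wellorder cond \<Rightarrow> 'o cond" where
  "evres p = p |` {\<gamma>. even_ord \<gamma>}"

definition Pc :: "('o \<Rightarrow> 'o cond set) \<Rightarrow> 'o::wellorder \<Rightarrow> 'o cc set" where
  "Pc P \<gamma> = {c. emb c \<in> P \<gamma> \<and> dom c \<subseteq> {\<delta>. even_ord \<delta>}}"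

text \<open>order of P^c (clause (5) restricted to conditions with only even coordinates): r \<le> s\<close>
definition lec :: "'o cc \<Rightarrow> 'o cc \<Rightarrow> bool" where
  "lec r s \<longleftrightarrow> dom s \<subseteq> dom r \<and> (\<forall>\<delta>\<in>dom s. the (s \<delta>) \<subseteq>\<^sub>m the (r \<delta>))"

definition leq :: "('o \<Rightarrow> 'o cond set) \<Rightarrow> 'o::wellorder cond \<Rightarrow> 'o cond \<Rightarrow> bool" where
  "leq P q p \<longleftrightarrow> dom p \<subseteq> dom q
     \<and> (\<forall>\<gamma>\<in>dom p. even_ord \<gamma> \<longrightarrow> coh p \<gamma> \<subseteq>\<^sub>m coh q \<gamma>)
     \<and> (\<forall>\<gamma>\<in>dom p. odd_ord \<gamma> \<longrightarrow>
           forces (Pc P \<gamma>) lec (endext (nm p \<gamma>) (nm q \<gamma>)) (cres q \<gamma>))"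

definition leqb :: "('o \<Rightarrow> 'o cond set) \<Rightarrow> 'o::wellorder \<Rightarrow> 'o cond \<Rightarrow> 'o cond \<Rightarrow> bool" where
  "leqb P \<beta> q p \<longleftrightarrow> p \<in> P \<beta> \<and> q \<in> P \<beta> \<and> leq P q p"

definition leqstar :: "('o \<Rightarrow> 'o cond set) \<Rightarrow> 'o::wellorder \<Rightarrow> 'o cond \<Rightarrow> 'o cond \<Rightarrow> bool" where
  "leqstar P \<beta> q p \<longleftrightarrow> leqb P \<beta> q p \<and> evres q = evres p"

definition compat_star :: "('o \<Rightarrow> 'o cond set) \<Rightarrow> 'o::wellorder \<Rightarrow> 'o cond \<Rightarrow> 'o cond \<Rightarrow> bool" where
  "compat_star P \<beta> r p \<longleftrightarrow> (\<exists>s\<in>P \<beta>. leqstar P \<beta> s r \<and> leqstar P \<beta> s p)"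

definition leqstar_s :: "('o \<Rightarrow> 'o cond set) \<Rightarrow> 'o::wellorder \<Rightarrow> 'o cond \<Rightarrow> 'o cond \<Rightarrow> bool" where
  "leqstar_s P \<beta> q p \<longleftrightarrow> p \<in> P \<beta> \<and> q \<in> P \<beta> \<and>
     (\<forall>r. leqstar P \<beta> r q \<longrightarrow> compat_star P \<beta> r p)"

definition suitable :: "'o::wellorder \<Rightarrow> 'o \<Rightarrow> ('o \<Rightarrow> 'o cond set) \<Rightarrow> ('o \<Rightarrow> 'o \<Rightarrow> 'o cond set) \<Rightarrow> bool" where
  "suitable om2 \<alpha> P S \<longleftrightarrow>
     (\<forall>\<gamma>. \<gamma> < \<alpha> \<and> odd_ord \<gamma> \<longrightarrow>
        nice_name (P \<gamma>) (leq P) {\<xi>. \<xi> < om2 \<and> cof_omega \<xi>} (S \<gamma>))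
   \<and> (\<forall>\<beta>. \<beta> \<le> \<alpha> \<longrightarrow> (\<forall>p\<in>P \<beta>. dom p \<subseteq> {\<gamma>. \<gamma> < \<beta>}))
   \<and> (\<forall>z. (\<forall>x. z \<le> x) \<longrightarrow> P z = {Map.empty})
   \<and> (\<forall>\<gamma> \<beta>. \<gamma> < \<alpha> \<and> even_ord \<gamma> \<and> succ_of \<gamma> \<beta> \<longrightarrow>
        (\<forall>p. p \<in> P \<beta> \<longleftrightarrow> dom p \<subseteq> {x. x \<le> \<gamma>} \<and> p |` {x. x < \<gamma>} \<in> P \<gamma>
             \<and> (\<gamma> \<in> dom p \<longrightarrow> (\<exists>c. p \<gamma> = Some (Cohen c) \<and> finite (dom c)))))
   \<and> (\<forall>\<gamma> \<beta>. \<gamma> < \<alpha> \<and> odd_ord \<gamma> \<and> succ_of \<gamma> \<beta> \<longrightarrow>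
        (\<forall>p. p \<in> P \<beta> \<longleftrightarrow> dom p \<subseteq> {x. x \<le> \<gamma>} \<and> p |` {x. x < \<gamma>} \<in> P \<gamma>
             \<and> (\<gamma> \<in> dom p \<longrightarrow> (\<exists>n. p \<gamma> = Some (Club n)
                    \<and> nice_name (Pc P \<gamma>) lec {\<xi>. \<xi> < om2} n
                    \<and> forces (Pc P \<gamma>) lec (cbs om2 n) Map.empty
                    \<and> forces (P \<gamma>) (leq P) (disjoint_fm (embname n) (S \<gamma>)) (p |` {x. x < \<gamma>})))))
   \<and> (\<forall>\<delta>. \<delta> \<le> \<alpha> \<and> is_limit \<delta> \<longrightarrow>
        (\<forall>p. p \<in> P \<delta> \<longleftrightarrow> dom p \<subseteq> {x. x < \<delta>}
             \<and> finite (dom p \<inter> {x. even_ord x})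
             \<and> (card_of (dom p \<inter> {x. odd_ord x}), card_of {\<eta>. \<eta> < om2}) \<in> ordLess
             \<and> (\<forall>\<beta>. \<beta> < \<delta> \<longrightarrow> p |` {x. x < \<beta>} \<in> P \<beta>)))"

end

theory Submission
  imports Defs
begin

lemma lec_refl[simp]: "lec r r" by (auto simp: lec_def)
lemma lec_trans: "lec a b \<Longrightarrow> lec b c \<Longrightarrow> lec a c"
  unfolding lec_def dom_def map_le_def by force

lemma lec_empty[simp]: "lec r Map.empty" by (auto simp: lec_def)

lemma forces_mono: "forces X lec \<phi> p \<Longrightarrow> lec q p \<Longrightarrow> forces X lec \<phi> q"
proof (induction \<phi> arbitrary: p q)
  case (Mem x1 x2) then show ?case by (simp) (meson lec_trans)
next
  case (Neg \<phi>) then show ?case by (simp) (meson lec_trans)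
next
  case (All x) then show ?case by (simp) (meson rangeI)
qed auto

lemma forces_MP: "forces X lec (Imp \<phi> \<psi>) r \<Longrightarrow> forces X lec \<phi> r \<Longrightarrow> r \<in> X \<Longrightarrow>
   \<exists>r'\<in>X. lec r' r \<and> forces X lec \<psi> r'"
  unfolding Imp_def by auto

lemma forces_endext_refl: "forces X lec (endext a a) x"
  unfolding endext_def Imp_def by simp (meson lec_refl lec_trans)

primrec evl :: "('o, 'c) fm \<Rightarrow> bool" where
  "evl (Ground b) = b"
| "evl (Mem \<xi> n) = (n \<xi> \<noteq> {})"
| "evl (Neg \<phi>) = (\<not> evl \<phi>)"
| "evl (Conj \<phi> \<psi>) = (evl \<phi> \<and> evl \<psi>)"
| "evl (All f) = (\<forall>\<xi>. evl (f \<xi>))"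

primrec chk :: "'c \<Rightarrow> ('o, 'c) fm \<Rightarrow> bool" where
  "chk e (Ground b) = True"
| "chk e (Mem \<xi> n) = (\<forall>x. n x \<subseteq> {e})"
| "chk e (Neg \<phi>) = chk e \<phi>"
| "chk e (Conj \<phi> \<psi>) = (chk e \<phi> \<and> chk e \<psi>)"
| "chk e (All f) = (\<forall>\<xi>. chk e (f \<xi>))"

lemma forces_chk: "chk Map.empty \<phi> \<Longrightarrow> t \<in> X \<Longrightarrow> forces X lec \<phi> t = evl \<phi>"
proof (induction \<phi> arbitrary: t)
  case (Mem x1 x2)
  then have "x2 x1 = {} \<or> x2 x1 = {Map.empty}" by (auto simp: subset_singleton_iff)
  then show ?case
  proof
    assume "x2 x1 = {}" then show ?thesis using Mem.prems(2) by (auto intro!: bexI[of _ t])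
  next
    assume "x2 x1 = {Map.empty}" then show ?thesis by simp (use lec_refl in blast)
  qed
next
  case (Neg \<phi>) then show ?case by simp (use lec_refl in blast)
qed auto

definition chkn :: "'o \<Rightarrow> ('o \<Rightarrow> 'o cc set)" where
  "chkn a = (\<lambda>\<xi>. if \<xi> = a then {Map.empty} else {})"

lemma forces_Mem_chkn: "t \<in> X \<Longrightarrow> forces X lec (Mem \<xi> (chkn a)) t = (\<xi> = a)"
  using forces_chk[of "Mem \<xi> (chkn a)" t X] by (auto simp: chkn_def)



lemma not_Imp: "(\<not> forces X le (Imp \<phi> \<psi>) r) \<longleftrightarrow> (\<exists>r'\<in>X. le r' r \<and> forces X le \<phi> r' \<and> forces X le (Neg \<psi>) r')"
  by (auto simp add: Imp_def)

lemma endext_inc: "t \<in> X \<Longrightarrow> forces X lec (endext A B) t \<Longrightarrow> forces X lec (Mem \<xi> A) t \<Longrightarrow>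
  \<exists>t'\<in>X. lec t' t \<and> forces X lec (Mem \<xi> B) t'"
proof -
  assume a: "t \<in> X" "forces X lec (endext A B) t" "forces X lec (Mem \<xi> A) t"
  from a(2) have "forces X lec (Imp (Mem \<xi> A) (Mem \<xi> B)) t" unfolding endext_def by simp
  from forces_MP[OF this a(3,1)] show ?thesis .
qed

lemma endext_top: "t \<in> X \<Longrightarrow> forces X lec (endext A B) t \<Longrightarrow> forces X lec (Mem \<xi> B) t \<Longrightarrow>
  forces X lec (Neg (Mem \<xi> A)) t \<Longrightarrow> forces X lec (Mem \<zeta> A) t \<Longrightarrow> \<zeta> < \<xi>"
proof -
  assume a: "t \<in> X" "forces X lec (endext A B) t" "forces X lec (Mem \<xi> B) t"
    "forces X lec (Neg (Mem \<xi> A)) t" "forces X lec (Mem \<zeta> A) t"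
  from a(2) have "forces X lec (Imp (Conj (Mem \<xi> B) (Conj (Neg (Mem \<xi> A)) (Mem \<zeta> A))) (Ground (\<zeta> < \<xi>))) t"
    unfolding endext_def by simp
  from forces_MP[OF this _ a(1)] a(3-5) show "\<zeta> < \<xi>" by auto
qed

lemma endext_caseii:
  assumes "t \<in> X" "forces X lec (endext A B) t" "forces X lec (endext C B) t"
    "forces X lec (Mem \<xi> C) t" "forces X lec (Neg (Mem \<xi> A)) t" "forces X lec (Mem \<zeta> A) t"
  shows "\<zeta> < \<xi>"
proof -
  obtain t' where t': "t' \<in> X" "lec t' t" "forces X lec (Mem \<xi> B) t'"
    using endext_inc[OF assms(1,3,4)] by blast
  show ?thesis
    by (rule endext_top[OF t'(1) forces_mono[OF assms(2) t'(2)] t'(3)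
          forces_mono[OF assms(5) t'(2)] forces_mono[OF assms(6) t'(2)]])
qed

lemma neg_endext_E:
  assumes "t \<in> X" "forces X lec (Neg (endext A C)) t"
  shows "\<exists>t'\<in>X. lec t' t \<and> ((\<exists>\<xi>. forces X lec (Mem \<xi> A) t' \<and> forces X lec (Neg (Mem \<xi> C)) t') \<or>
     (\<exists>\<xi> \<zeta>. forces X lec (Mem \<xi> C) t' \<and> forces X lec (Neg (Mem \<xi> A)) t' \<and> forces X lec (Mem \<zeta> A) t' \<and> \<not> \<zeta> < \<xi>))"
proof -
  have "\<not> forces X lec (endext A C) t" using assms by auto
  then have "(\<exists>\<xi>. \<not> forces X lec (Imp (Mem \<xi> A) (Mem \<xi> C)) t) \<or>
     (\<exists>\<xi> \<zeta>. \<not> forces X lec (Imp (Conj (Mem \<xi> C) (Conj (Neg (Mem \<xi> A)) (Mem \<zeta> A))) (Ground (\<zeta> < \<xi>))) t)"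
    unfolding endext_def by auto
  then show ?thesis
  proof
    assume "\<exists>\<xi>. \<not> forces X lec (Imp (Mem \<xi> A) (Mem \<xi> C)) t"
    then show ?thesis unfolding not_Imp by blast
  next
    assume "\<exists>\<xi> \<zeta>. \<not> forces X lec (Imp (Conj (Mem \<xi> C) (Conj (Neg (Mem \<xi> A)) (Mem \<zeta> A))) (Ground (\<zeta> < \<xi>))) t"
    then obtain \<xi> \<zeta> where "\<not> forces X lec (Imp (Conj (Mem \<xi> C) (Conj (Neg (Mem \<xi> A)) (Mem \<zeta> A))) (Ground (\<zeta> < \<xi>))) t" by blast
    then obtain t' where t': "t' \<in> X" "lec t' t" and cj: "forces X lec (Conj (Mem \<xi> C) (Conj (Neg (Mem \<xi> A)) (Mem \<zeta> A))) t'"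
      and ng: "forces X lec (Neg (Ground (\<zeta> < \<xi>))) t'" unfolding not_Imp by force
    have "\<not> \<zeta> < \<xi>" using ng t'(1) by simp (use lec_refl in blast)
    moreover from cj have "forces X lec (Mem \<xi> C) t'" "forces X lec (Neg (Mem \<xi> A)) t'" "forces X lec (Mem \<zeta> A) t'"
      by (simp only: forces.simps(4))+
    ultimately show ?thesis using t' by blast
  qed
qed

lemma disj_key:
  assumes c: "c \<in> X" and e1: "forces X lec (endext A B) c" and e2: "forces X lec (endext C B) c"
  shows "forces X lec (Disj (endext A C) (endext C A)) c"
  unfolding Disj_def
proof (subst forces.simps(3), intro ballI impI notI)
  fix r assume r: "r \<in> X" "lec r c" and n: "forces X lec (Conj (Neg (endext A C)) (Neg (endext C A))) r"
  have n1: "forces X lec (Neg (endext A C)) r" and n2: "forces X lec (Neg (endext C A)) r" using n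
    by (simp only: forces.simps(4))+
  obtain r1 where r1: "r1 \<in> X" "lec r1 r" and
    c1: "(\<exists>\<xi>. forces X lec (Mem \<xi> A) r1 \<and> forces X lec (Neg (Mem \<xi> C)) r1) \<or>
     (\<exists>\<xi> \<zeta>. forces X lec (Mem \<xi> C) r1 \<and> forces X lec (Neg (Mem \<xi> A)) r1 \<and> forces X lec (Mem \<zeta> A) r1 \<and> \<not> \<zeta> < \<xi>)"
    using neg_endext_E[OF r(1) n1] by blast
  have rc1: "lec r1 c" using r r1 lec_trans by blast
  have E1: "forces X lec (endext A B) r1" "forces X lec (endext C B) r1"
    using forces_mono[OF e1 rc1] forces_mono[OF e2 rc1] .
  obtain r2 where r2: "r2 \<in> X" "lec r2 r1" and
    c2: "(\<exists>\<xi>. forces X lec (Mem \<xi> C) r2 \<and> forces X lec (Neg (Mem \<xi> A)) r2) \<or>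
     (\<exists>\<xi> \<zeta>. forces X lec (Mem \<xi> A) r2 \<and> forces X lec (Neg (Mem \<xi> C)) r2 \<and> forces X lec (Mem \<zeta> C) r2 \<and> \<not> \<zeta> < \<xi>)"
    using neg_endext_E[OF r1(1) forces_mono[OF n2 r1(2)]] by blast
  have E2: "forces X lec (endext A B) r2" "forces X lec (endext C B) r2"
    using forces_mono[OF E1(1) r2(2)] forces_mono[OF E1(2) r2(2)] .
  show False
  proof (cases "\<exists>\<xi> \<zeta>. forces X lec (Mem \<xi> C) r1 \<and> forces X lec (Neg (Mem \<xi> A)) r1 \<and> forces X lec (Mem \<zeta> A) r1 \<and> \<not> \<zeta> < \<xi>")
    case True
    then show False using endext_caseii[OF r1(1) E1(1) E1(2)] by blast
  next
    case False
    then obtain \<xi> where x1: "forces X lec (Mem \<xi> A) r1" "forces X lec (Neg (Mem \<xi> C)) r1" using c1 by blast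
    show False
    proof (cases "\<exists>\<xi> \<zeta>. forces X lec (Mem \<xi> A) r2 \<and> forces X lec (Neg (Mem \<xi> C)) r2 \<and> forces X lec (Mem \<zeta> C) r2 \<and> \<not> \<zeta> < \<xi>")
      case True
      then show False using endext_caseii[OF r2(1) E2(2) E2(1)] by blast
    next
      case False
      then obtain \<xi>' where x2: "forces X lec (Mem \<xi>' C) r2" "forces X lec (Neg (Mem \<xi>' A)) r2" using c2 by blast
      have x1': "forces X lec (Mem \<xi> A) r2" "forces X lec (Neg (Mem \<xi> C)) r2"
        using forces_mono[OF x1(1) r2(2)] forces_mono[OF x1(2) r2(2)] .
      have "\<xi> < \<xi>'" by (rule endext_caseii[OF r2(1) E2(1) E2(2) x2(1) x2(2) x1'(1)])
      moreover have "\<xi>' < \<xi>" by (rule endext_caseii[OF r2(1) E2(2) E2(1) x1'(1) x1'(2) x2(1)])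
      ultimately show False by simp
    qed
  qed
qed

lemma forces_neg_Mem_chkn: "forces X lec (Neg (Mem \<xi> (chkn a))) t \<longleftrightarrow> (\<forall>r\<in>X. lec r t \<longrightarrow> \<xi> \<noteq> a)"
  using forces_Mem_chkn[of _ X \<xi> a] by (simp del: forces.simps(2))

lemma K2:
  assumes t: "t \<in> X" and e: "forces X lec (endext A B) t" "forces X lec (endext (chkn a) B) t"
    and y: "forces X lec (Mem y A) t" and ne: "y \<noteq> a"
  shows "a < y"
proof -
  obtain t' where t': "t' \<in> X" "lec t' t" "forces X lec (Mem y B) t'"
    using endext_inc[OF t e(1) y] by blast
  have ng: "forces X lec (Neg (Mem y (chkn a))) t'" using ne by (simp only: forces_neg_Mem_chkn) simp
  have m: "forces X lec (Mem a (chkn a)) t'" using forces_Mem_chkn[OF t'(1)] by simp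
  show ?thesis by (rule endext_top[OF t'(1) forces_mono[OF e(2) t'(2)] t'(3) ng m])
qed

lemma K1:
  assumes t: "t \<in> X" and e: "forces X lec (endext A B) t" "forces X lec (endext (chkn a) B) t"
    and y: "forces X lec (Mem y A) t"
  shows "\<exists>t'\<in>X. lec t' t \<and> forces X lec (Mem a A) t'"
proof (rule ccontr)
  assume "\<not> ?thesis"
  then have na: "forces X lec (Neg (Mem a A)) t" by simp
  have "y \<noteq> a"
  proof
    assume "y = a"
    with y have "forces X lec (Mem a A) t" by simp
    moreover have "\<not> forces X lec (Mem a A) t" using na t lec_refl[of t] by (simp only: forces.simps(3)) blast
    ultimately show False by blast
  qed
  then have ay: "a < y" using K2[OF t e y] by blast
  have "forces X lec (Mem a (chkn a)) t" using forces_Mem_chkn[OF t] by simp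
  then obtain t' where t': "t' \<in> X" "lec t' t" "forces X lec (Mem a B) t'"
    using endext_inc[OF t e(2)] by blast
  have "y < a" by (rule endext_top[OF t'(1) forces_mono[OF e(1) t'(2)] t'(3) forces_mono[OF na t'(2)] forces_mono[OF y t'(2)]])
  then show False using ay by simp
qed

lemma K:
  assumes c: "c \<in> X" and ne: "forces X lec (Ex (\<lambda>\<xi>. Mem \<xi> A)) c"
    and e0: "forces X lec (endext A B0) c" "forces X lec (endext (chkn a0) B0) c"
    and e1: "forces X lec (endext A B1) c" "forces X lec (endext (chkn a1) B1) c"
    and d: "a0 \<noteq> a1"
  shows False
proof -
  from ne c have "\<not> (\<forall>x. forces X lec (Neg (Mem x A)) c)" unfolding Ex_def
    by simp
  then obtain x where "\<not> forces X lec (Neg (Mem x A)) c" by blast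
  then obtain t where t: "t \<in> X" "lec t c" "forces X lec (Mem x A) t"
    by (simp only: forces.simps(3)) blast
  obtain t1 where t1: "t1 \<in> X" "lec t1 t" "forces X lec (Mem a0 A) t1"
    using K1[OF t(1) forces_mono[OF e0(1) t(2)] forces_mono[OF e0(2) t(2)] t(3)] by blast
  have t1c: "lec t1 c" using t t1 lec_trans by blast
  obtain t2 where t2: "t2 \<in> X" "lec t2 t1" "forces X lec (Mem a1 A) t2"
    using K1[OF t1(1) forces_mono[OF e1(1) t1c] forces_mono[OF e1(2) t1c] t1(3)] by blast
  have t2c: "lec t2 c" using t2 t1c lec_trans by blast
  have "a1 < a0" using K2[OF t2(1) forces_mono[OF e1(1) t2c] forces_mono[OF e1(2) t2c] forces_mono[OF t1(3) t2(2)]] d by blast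
  moreover have "a0 < a1" using K2[OF t2(1) forces_mono[OF e0(1) t2c] forces_mono[OF e0(2) t2c] t2(3)] d by blast
  ultimately show False by simp
qed

lemma om2_infinite:
  assumes "is_omega2 (om2::'o::wellorder)"
  shows "infinite {\<eta>. \<eta> < om2}"
proof
  assume fin: "finite {\<eta>. \<eta> < om2}"
  let ?R = "ord_rel {\<eta>. \<eta> < om2}" and ?C = "cardSuc (cardSuc natLeq)"
  have "Field ?R \<subseteq> {\<eta>. \<eta> < om2}" unfolding ord_rel_def Field_def by auto
  with fin have fR: "finite (Field ?R)" by (rule finite_subset[rotated])
  have "(?R, ?C) \<in> ordIso" using assms unfolding is_omega2_def by simp
  then have "(?C, ?R) \<in> ordLeq" using ordIso_iff_ordLeq by blast
  then have "(card_of (Field ?C), card_of (Field ?R)) \<in> ordLeq" by (rule card_of_mono2)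
  with fR have "finite (Field ?C)" using card_of_ordLeq_finite by blast
  moreover have "infinite (Field ?C)"
    using cardSuc_finite[OF cardSuc_Card_order[OF natLeq_Card_order]] cardSuc_finite[OF natLeq_Card_order]
    by (simp add: Field_natLeq)
  ultimately show False by blast
qed

lemma fin_less_inf: "finite A \<Longrightarrow> infinite B \<Longrightarrow> (card_of A, card_of B) \<in> ordLess"
  by (rule finite_ordLess_infinite[OF card_of_Well_order card_of_Well_order]) (simp_all add: Field_card_of)

lemma insert_less_inf: "infinite B \<Longrightarrow> (card_of A, card_of B) \<in> ordLess \<Longrightarrow> (card_of (insert x A), card_of B) \<in> ordLess"
  using card_of_Un_ordLess_infinite[of B "{x}" A] fin_less_inf[of "{x}" B] by simp

lemma ord_cases:
  fixes \<beta> :: "'o::wellorder"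
  obtains "\<forall>x. \<beta> \<le> x" | \<delta> where "succ_of \<delta> \<beta>" | "is_limit \<beta>"
proof -
  consider "\<forall>x. \<beta> \<le> x" | "\<exists>\<eta>. \<eta> < \<beta>" using not_less by blast
  then show ?thesis
  proof cases
    case 1 then show ?thesis using that by blast
  next
    case 2
    show ?thesis
    proof (cases "\<exists>\<delta>. succ_of \<delta> \<beta>")
      case True then show ?thesis using that by blast
    next
      case False
      then have "is_limit \<beta>" using 2 unfolding is_limit_def lim0_def succ_of_def by blast
      then show ?thesis using that by blast
    qed
  qed
qed

lemma succ_le: "succ_of \<delta> \<beta> \<Longrightarrow> z < \<beta> \<Longrightarrow> z \<le> (\<delta>::'o::wellorder)"
  unfolding succ_of_def using not_less by blast

definition sc :: "'o::wellorder \<Rightarrow> 'o" where "sc \<delta> = (LEAST x. \<delta> < x)"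

lemma sc_succ: "\<delta> < (\<beta>::'o::wellorder) \<Longrightarrow> succ_of \<delta> (sc \<delta>) \<and> sc \<delta> \<le> \<beta>"
  unfolding sc_def succ_of_def by (metis LeastI Least_le not_less_Least)

lemma restr_dom: "dom p \<subseteq> A \<Longrightarrow> p |` A = p"
proof (rule ext)
  fix x assume d: "dom p \<subseteq> A"
  show "(p |` A) x = p x"
  proof (cases "x \<in> A")
    case False
    then have "x \<notin> dom p" using d by blast
    then show ?thesis using False by (simp add: domIff)
  qed simp
qed

lemma restr_upd_notin: "x \<notin> A \<Longrightarrow> (q(x \<mapsto> v)) |` A = q |` A"
  by (rule ext) (auto simp: restrict_map_def)

lemma evres_upd_odd: "odd_ord x \<Longrightarrow> evres (q(x \<mapsto> v)) = evres q"
  unfolding evres_def odd_ord_def by (rule restr_upd_notin) simp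

lemma cres_evres: "evres a = evres b \<Longrightarrow> cres a \<gamma> = cres b \<gamma>"
proof (rule ext)
  fix \<delta> assume e: "evres a = evres b"
  show "cres a \<gamma> \<delta> = cres b \<gamma> \<delta>"
  proof (cases "even_ord \<delta>")
    case True
    then have "a \<delta> = b \<delta>" using fun_cong[OF e, of \<delta>] by (simp add: evres_def)
    then show ?thesis by (simp add: cres_def)
  qed (simp add: cres_def)
qed

lemma leq_refl: "leq P q q"
  unfolding leq_def by (auto simp: forces_endext_refl)

lemma leq_sub: "x \<subseteq>\<^sub>m y \<Longrightarrow> leq P t y \<Longrightarrow> leq P t x"
proof -
  assume xy: "x \<subseteq>\<^sub>m y" and l: "leq P t y"
  have d: "dom x \<subseteq> dom y" using xy by (rule map_le_implies_dom_le)
  have e: "\<gamma> \<in> dom x \<Longrightarrow> x \<gamma> = y \<gamma>" for \<gamma> using xy by (auto simp: map_le_def)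
  have "coh x \<gamma> = coh y \<gamma>" "nm x \<gamma> = nm y \<gamma>" if "\<gamma> \<in> dom x" for \<gamma>
    using e[OF that] by (simp_all add: coh_def nm_def)
  note c = this
  show ?thesis unfolding leq_def
  proof (intro conjI ballI impI)
    show "dom x \<subseteq> dom t" using d l unfolding leq_def by blast
  next
    fix \<gamma> assume g: "\<gamma> \<in> dom x" "even_ord \<gamma>"
    have "\<gamma> \<in> dom y" using d g(1) by blast
    then have "coh y \<gamma> \<subseteq>\<^sub>m coh t \<gamma>" using l g(2) unfolding leq_def by blast
    then show "coh x \<gamma> \<subseteq>\<^sub>m coh t \<gamma>" using c(1)[OF g(1)] by simp
  next
    fix \<gamma> assume g: "\<gamma> \<in> dom x" "odd_ord \<gamma>"
    have "\<gamma> \<in> dom y" using d g(1) by blast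
    then have "forces (Pc P \<gamma>) lec (endext (nm y \<gamma>) (nm t \<gamma>)) (cres t \<gamma>)" using l g(2) unfolding leq_def by blast
    then show "forces (Pc P \<gamma>) lec (endext (nm x \<gamma>) (nm t \<gamma>)) (cres t \<gamma>)" using c(2)[OF g(1)] by simp
  qed
qed

lemma disj_transfer: "forces X le (disjoint_fm a b) x \<Longrightarrow> (\<forall>t\<in>X. le t y \<longrightarrow> le t x) \<Longrightarrow> forces X le (disjoint_fm a b) y"
  unfolding disjoint_fm_def by auto

lemma forces_Mem_nonempty: "forces X le (Mem \<xi> n) r \<Longrightarrow> r \<in> X \<Longrightarrow> le r r \<Longrightarrow> n \<xi> \<noteq> {}"
  by auto

lemma endext_empty: "forces X lec (endext (\<lambda>_. {}) A) x"
  unfolding endext_def Imp_def by simp (use lec_refl in blast)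

lemma forces_disj2: "(\<And>r. forces X lec \<psi> r) \<Longrightarrow> forces X lec (Disj \<phi> \<psi>) c"
  unfolding Disj_def by simp (use lec_refl in blast)

locale suit =
  fixes om2 \<alpha> :: "'o::wellorder" and P :: "'o \<Rightarrow> 'o cond set" and S :: "'o \<Rightarrow> 'o \<Rightarrow> 'o cond set"
  assumes suit: "suitable om2 \<alpha> P S" and inf2: "infinite {\<eta>. \<eta> < om2}"
begin

lemmas sc0 = suit[unfolded suitable_def]
lemmas sc1 = conjunct2[OF sc0]
lemmas sc2 = conjunct2[OF sc1]
lemmas sc3 = conjunct2[OF sc2]
lemmas sc4 = conjunct2[OF sc3]
lemmas sc5 = conjunct2[OF sc4]

lemma S_nice: "\<gamma> < \<alpha> \<Longrightarrow> odd_ord \<gamma> \<Longrightarrow> nice_name (P \<gamma>) (leq P) {\<xi>. \<xi> < om2 \<and> cof_omega \<xi>} (S \<gamma>)"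
  using conjunct1[OF sc0] by blast

lemma dom_sub: "\<beta> \<le> \<alpha> \<Longrightarrow> p \<in> P \<beta> \<Longrightarrow> dom p \<subseteq> {\<gamma>. \<gamma> < \<beta>}"
  using conjunct1[OF sc1] by blast

lemma P_bot: "\<forall>x. z \<le> x \<Longrightarrow> P z = {Map.empty}"
  using conjunct1[OF sc2] by blast

lemma P_even: "\<gamma> < \<alpha> \<Longrightarrow> even_ord \<gamma> \<Longrightarrow> succ_of \<gamma> \<beta> \<Longrightarrow>
  p \<in> P \<beta> \<longleftrightarrow> dom p \<subseteq> {x. x \<le> \<gamma>} \<and> p |` {x. x < \<gamma>} \<in> P \<gamma>
             \<and> (\<gamma> \<in> dom p \<longrightarrow> (\<exists>c. p \<gamma> = Some (Cohen c) \<and> finite (dom c)))"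
  using conjunct1[OF sc3] by blast

lemma P_odd: "\<gamma> < \<alpha> \<Longrightarrow> odd_ord \<gamma> \<Longrightarrow> succ_of \<gamma> \<beta> \<Longrightarrow>
  p \<in> P \<beta> \<longleftrightarrow> dom p \<subseteq> {x. x \<le> \<gamma>} \<and> p |` {x. x < \<gamma>} \<in> P \<gamma>
             \<and> (\<gamma> \<in> dom p \<longrightarrow> (\<exists>n. p \<gamma> = Some (Club n)
                    \<and> nice_name (Pc P \<gamma>) lec {\<xi>. \<xi> < om2} n
                    \<and> forces (Pc P \<gamma>) lec (cbs om2 n) Map.empty
                    \<and> forces (P \<gamma>) (leq P) (disjoint_fm (embname n) (S \<gamma>)) (p |` {x. x < \<gamma>})))"
  using conjunct1[OF sc4] by blast

lemma P_lim: "\<delta> \<le> \<alpha> \<Longrightarrow> is_limit \<delta> \<Longrightarrow>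
  p \<in> P \<delta> \<longleftrightarrow> dom p \<subseteq> {x. x < \<delta>}
             \<and> finite (dom p \<inter> {x. even_ord x})
             \<and> (card_of (dom p \<inter> {x. odd_ord x}), card_of {\<eta>. \<eta> < om2}) \<in> ordLess
             \<and> (\<forall>\<beta>. \<beta> < \<delta> \<longrightarrow> p |` {x. x < \<beta>} \<in> P \<beta>)"
  using sc5 by blast

lemma P_succ_restr: "succ_of \<delta> \<beta> \<Longrightarrow> \<beta> \<le> \<alpha> \<Longrightarrow> p \<in> P \<beta> \<Longrightarrow> p |` {x. x < \<delta>} \<in> P \<delta>"
proof -
  assume s: "succ_of \<delta> \<beta>" "\<beta> \<le> \<alpha>" "p \<in> P \<beta>"
  have "\<delta> < \<alpha>" using s unfolding succ_of_def using order.strict_trans2 by blast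
  then show ?thesis using s P_even[of \<delta> \<beta> p] P_odd[of \<delta> \<beta> p] unfolding odd_ord_def by blast
qed

lemma restr_P: "\<beta> \<le> \<alpha> \<Longrightarrow> p \<in> P \<beta> \<Longrightarrow> z \<le> \<beta> \<Longrightarrow> p |` {x. x < z} \<in> P z"
proof (induction \<beta> arbitrary: p z rule: less_induct)
  case (less \<beta>)
  show ?case
  proof (cases "z = \<beta>")
    case True
    then show ?thesis using less.prems restr_dom[OF dom_sub[OF less.prems(1,2)]] by simp
  next
    case False
    then have zb: "z < \<beta>" using less.prems(3) by simp
    show ?thesis
    proof (cases \<beta> rule: ord_cases)
      case 1 then show ?thesis using zb by (simp add: not_less[symmetric])
    next
      case (2 \<delta>)
      have db: "\<delta> < \<beta>" using 2 unfolding succ_of_def by simp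
      have r: "p |` {x. x < \<delta>} \<in> P \<delta>" using P_succ_restr[OF 2 less.prems(1,2)] .
      have "z \<le> \<delta>" using succ_le[OF 2 zb] .
      then have "(p |` {x. x < \<delta>}) |` {x. x < z} \<in> P z"
        using less.IH[OF db _ r] less.prems(1) db by simp
      moreover have "{x. x < \<delta>} \<inter> {x. x < z} = {x. x < z}" using \<open>z \<le> \<delta>\<close> by auto
      ultimately show ?thesis by simp
    next
      case 3
      then show ?thesis using P_lim[OF less.prems(1) 3] less.prems(2) zb by blast
    qed
  qed
qed

lemma empty_P: "\<beta> \<le> \<alpha> \<Longrightarrow> Map.empty \<in> P \<beta>"
proof (induction \<beta> rule: less_induct)
  case (less \<beta>)
  show ?case
  proof (cases \<beta> rule: ord_cases)
    case 1 then show ?thesis using P_bot by simp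
  next
    case (2 \<delta>)
    have db: "\<delta> < \<beta>" using 2 unfolding succ_of_def by simp
    then have "\<delta> < \<alpha>" using less.prems by simp
    moreover have "Map.empty \<in> P \<delta>" using less.IH[OF db] db less.prems by simp
    ultimately show ?thesis
    proof (cases "even_ord \<delta>")
      case True
      then show ?thesis using P_even[OF \<open>\<delta> < \<alpha>\<close> True 2, of Map.empty] \<open>Map.empty \<in> P \<delta>\<close> by simp
    next
      case False
      then have "odd_ord \<delta>" unfolding odd_ord_def .
      then show ?thesis using P_odd[OF \<open>\<delta> < \<alpha>\<close> _ 2, of Map.empty] \<open>Map.empty \<in> P \<delta>\<close> by simp
    qed
  next
    case 3
    have "(card_of ({} :: 'o set), card_of {\<eta>. \<eta> < om2}) \<in> ordLess" using fin_less_inf inf2 by blast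
    then show ?thesis using P_lim[OF less.prems 3] less.IH less.prems by auto
  qed
qed

lemma cohen_P: "\<beta> \<le> \<alpha> \<Longrightarrow> p \<in> P \<beta> \<Longrightarrow> \<delta> \<in> dom p \<Longrightarrow> even_ord \<delta> \<Longrightarrow> \<exists>c. p \<delta> = Some (Cohen c)"
proof -
  assume a: "\<beta> \<le> \<alpha>" "p \<in> P \<beta>" "\<delta> \<in> dom p" "even_ord \<delta>"
  have db: "\<delta> < \<beta>" using dom_sub[OF a(1,2)] a(3) by blast
  have s: "succ_of \<delta> (sc \<delta>)" "sc \<delta> \<le> \<beta>" using sc_succ[OF db] by auto
  have "p |` {x. x < sc \<delta>} \<in> P (sc \<delta>)" using restr_P[OF a(1,2) s(2)] .
  moreover have "\<delta> \<in> dom (p |` {x. x < sc \<delta>})" using a(3) s(1) unfolding succ_of_def by simp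
  ultimately have "\<exists>c. (p |` {x. x < sc \<delta>}) \<delta> = Some (Cohen c)"
    using P_even[OF _ a(4) s(1)] db a(1) by auto
  then show ?thesis using s(1) unfolding succ_of_def by simp
qed

lemma club_P: "\<beta> \<le> \<alpha> \<Longrightarrow> p \<in> P \<beta> \<Longrightarrow> \<delta> \<in> dom p \<Longrightarrow> odd_ord \<delta> \<Longrightarrow>
  \<exists>n. p \<delta> = Some (Club n) \<and> forces (Pc P \<delta>) lec (cbs om2 n) Map.empty"
proof -
  assume a: "\<beta> \<le> \<alpha>" "p \<in> P \<beta>" "\<delta> \<in> dom p" "odd_ord \<delta>"
  have db: "\<delta> < \<beta>" using dom_sub[OF a(1,2)] a(3) by blast
  have s: "succ_of \<delta> (sc \<delta>)" "sc \<delta> \<le> \<beta>" using sc_succ[OF db] by auto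
  have "p |` {x. x < sc \<delta>} \<in> P (sc \<delta>)" using restr_P[OF a(1,2) s(2)] .
  moreover have "\<delta> \<in> dom (p |` {x. x < sc \<delta>})" using a(3) s(1) unfolding succ_of_def by simp
  ultimately have "\<exists>n. (p |` {x. x < sc \<delta>}) \<delta> = Some (Club n) \<and> forces (Pc P \<delta>) lec (cbs om2 n) Map.empty"
    using P_odd[OF _ a(4) s(1)] db a(1) by auto
  then show ?thesis using s(1) unfolding succ_of_def by simp
qed

end

lemma evres_restr: "evres p |` A = evres (p |` A)"
  by (simp add: evres_def Int_commute)

lemma dom_evres: "dom (evres p) = dom p \<inter> {\<gamma>. even_ord \<gamma>}"
  by (simp add: evres_def)

lemma evres_apply: "even_ord \<gamma> \<Longrightarrow> evres p \<gamma> = p \<gamma>"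
  by (simp add: evres_def)

context suit
begin

lemma evres_P: "\<beta> \<le> \<alpha> \<Longrightarrow> p \<in> P \<beta> \<Longrightarrow> evres p \<in> P \<beta>"
proof (induction \<beta> arbitrary: p rule: less_induct)
  case (less \<beta>)
  show ?case
  proof (cases \<beta> rule: ord_cases)
    case 1
    then have "p = Map.empty" using less.prems P_bot by simp
    then show ?thesis using less.prems by (simp add: evres_def)
  next
    case (2 \<delta>)
    have db: "\<delta> < \<beta>" using 2 unfolding succ_of_def by simp
    then have da: "\<delta> < \<alpha>" using less.prems by simp
    have r: "p |` {x. x < \<delta>} \<in> P \<delta>" using P_succ_restr[OF 2 less.prems(1,2)] .
    have IH: "evres p |` {x. x < \<delta>} \<in> P \<delta>" using less.IH[OF db _ r] db less.prems(1) unfolding evres_restr by simp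
    show ?thesis
    proof (cases "even_ord \<delta>")
      case True
      have pc: "dom p \<subseteq> {x. x \<le> \<delta>} \<and> (\<delta> \<in> dom p \<longrightarrow> (\<exists>c. p \<delta> = Some (Cohen c) \<and> finite (dom c)))"
        using P_even[OF da True 2, of p] less.prems(2) by simp
      have "dom (evres p) \<subseteq> {x. x \<le> \<delta>}" using pc dom_evres by blast
      moreover have "\<delta> \<in> dom (evres p) \<longrightarrow> (\<exists>c. evres p \<delta> = Some (Cohen c) \<and> finite (dom c))"
        using pc unfolding dom_evres evres_apply[OF True] by blast
      ultimately show ?thesis using P_even[OF da True 2, of "evres p"] IH by simp
    next
      case False
      then have od: "odd_ord \<delta>" unfolding odd_ord_def .
      have pc: "dom p \<subseteq> {x. x \<le> \<delta>}" using P_odd[OF da od 2, of p] less.prems(2) by simp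
      have "dom (evres p) \<subseteq> {x. x \<le> \<delta>}" using pc dom_evres by blast
      moreover have "\<delta> \<notin> dom (evres p)" using False dom_evres by blast
      ultimately show ?thesis using P_odd[OF da od 2, of "evres p"] IH by simp
    qed
  next
    case 3
    have pl: "dom p \<subseteq> {x. x < \<beta>}" "finite (dom p \<inter> {x. even_ord x})"
      "\<forall>\<beta>'. \<beta>' < \<beta> \<longrightarrow> p |` {x. x < \<beta>'} \<in> P \<beta>'"
      using P_lim[OF less.prems(1) 3, of p] less.prems(2) by auto
    have "dom (evres p) \<subseteq> {x. x < \<beta>}" using pl(1) dom_evres by blast
    moreover have "finite (dom (evres p) \<inter> {x. even_ord x})" using pl(2) unfolding dom_evres by (simp add: Int_assoc)
    moreover have "dom (evres p) \<inter> {x. odd_ord x} = {}" using dom_evres unfolding odd_ord_def by blast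
    moreover have "(card_of ({} :: 'o set), card_of {\<eta>. \<eta> < om2}) \<in> ordLess" using fin_less_inf inf2 by blast
    moreover have "\<forall>\<beta>'. \<beta>' < \<beta> \<longrightarrow> evres p |` {x. x < \<beta>'} \<in> P \<beta>'"
    proof (intro allI impI)
      fix \<beta>' assume b: "\<beta>' < \<beta>"
      have "evres (p |` {x. x < \<beta>'}) \<in> P \<beta>'" using less.IH[OF b] pl(3) b less.prems(1) by simp
      then show "evres p |` {x. x < \<beta>'} \<in> P \<beta>'" by (simp add: evres_restr)
    qed
    ultimately show ?thesis using P_lim[OF less.prems(1) 3, of "evres p"] by simp
  qed
qed

lemma cres_Pc: "\<beta> \<le> \<alpha> \<Longrightarrow> p \<in> P \<beta> \<Longrightarrow> \<gamma> \<le> \<beta> \<Longrightarrow> cres p \<gamma> \<in> Pc P \<gamma>"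
proof -
  assume a: "\<beta> \<le> \<alpha>" "p \<in> P \<beta>" "\<gamma> \<le> \<beta>"
  have "emb (cres p \<gamma>) = evres p |` {x. x < \<gamma>}"
  proof (rule ext)
    fix \<delta>
    show "emb (cres p \<gamma>) \<delta> = (evres p |` {x. x < \<gamma>}) \<delta>"
    proof (cases "\<delta> < \<gamma> \<and> even_ord \<delta>")
      case True
      show ?thesis
      proof (cases "p \<delta>")
        case None
        then show ?thesis using True by (simp add: emb_def cres_def evres_def)
      next
        case (Some v)
        then obtain c where "p \<delta> = Some (Cohen c)" using cohen_P[OF a(1,2) _ conjunct2[OF True]] by blast
        then show ?thesis using True by (simp add: emb_def cres_def evres_def)
      qed
    next
      case False
      then show ?thesis by (auto simp add: emb_def cres_def evres_def)
    qed
  qed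
  moreover have "evres p |` {x. x < \<gamma>} \<in> P \<gamma>" using restr_P[OF a(1) evres_P[OF a(1,2)] a(3)] .
  moreover have "dom (cres p \<gamma>) \<subseteq> {\<delta>. even_ord \<delta>}" by (auto simp: cres_def split: if_splits)
  ultimately show ?thesis unfolding Pc_def by simp
qed

end

context suit
begin

lemma ext_P:
  assumes a: "\<beta> \<le> \<alpha>" "q \<in> P \<beta>" "\<gamma> < \<beta>" "odd_ord \<gamma>" "\<gamma> \<notin> dom q"
    and n: "nice_name (Pc P \<gamma>) lec {\<xi>. \<xi> < om2} n" "forces (Pc P \<gamma>) lec (cbs om2 n) Map.empty"
      "forces (P \<gamma>) (leq P) (disjoint_fm (embname n) (S \<gamma>)) (q |` {x. x < \<gamma>})"
  shows "q(\<gamma> \<mapsto> Club n) \<in> P \<beta>"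
proof -
  define r where "r = q(\<gamma> \<mapsto> Club n)"
  have domr: "dom r = insert \<gamma> (dom q)" by (simp add: r_def)
  have rq: "x \<noteq> \<gamma> \<Longrightarrow> r x = q x" for x by (simp add: r_def)
  have main: "\<beta>' \<le> \<beta> \<Longrightarrow> \<gamma> < \<beta>' \<Longrightarrow> r |` {x. x < \<beta>'} \<in> P \<beta>'" for \<beta>'
  proof (induction \<beta>' rule: less_induct)
    case (less \<beta>')
    have ba: "\<beta>' \<le> \<alpha>" using less.prems a(1) by simp
    have q': "q |` {x. x < \<beta>'} \<in> P \<beta>'" using restr_P[OF a(1,2) less.prems(1)] .
    show ?case
    proof (cases \<beta>' rule: ord_cases)
      case 1
      then show ?thesis using less.prems(2) by (simp add: not_less[symmetric])
    next
      case (2 \<delta>)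
      have db: "\<delta> < \<beta>'" using 2 unfolding succ_of_def by simp
      then have da: "\<delta> < \<alpha>" using ba by simp
      have gd: "\<gamma> \<le> \<delta>" using succ_le[OF 2 less.prems(2)] .
      have domr': "dom (r |` {x. x < \<beta>'}) \<subseteq> {x. x \<le> \<delta>}" using succ_le[OF 2] by auto
      show ?thesis
      proof (cases "\<delta> = \<gamma>")
        case True
        have e1: "(r |` {x. x < \<beta>'}) |` {x. x < \<gamma>} = q |` {x. x < \<gamma>}"
        proof -
          have "{x. x < \<beta>'} \<inter> {x. x < \<gamma>} = {x. x < \<gamma>}" using less.prems(2) by auto
          then have "(r |` {x. x < \<beta>'}) |` {x. x < \<gamma>} = r |` {x. x < \<gamma>}" by simp
          also have "\<dots> = q |` {x. x < \<gamma>}" unfolding r_def by (rule restr_upd_notin) simp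
          finally show ?thesis .
        qed
        have qg: "q |` {x. x < \<gamma>} \<in> P \<gamma>" using restr_P[OF a(1,2)] a(3) by simp
        have rg: "(r |` {x. x < \<beta>'}) \<gamma> = Some (Club n)" using less.prems(2) by (simp add: r_def)
        have s2: "succ_of \<gamma> \<beta>'" using 2 True by simp
        have ga: "\<gamma> < \<alpha>" using True da by simp
        show ?thesis using P_odd[OF ga a(4) s2, of "r |` {x. x < \<beta>'}"] domr' True e1 qg rg n by simp
      next
        case False
        then have gd': "\<gamma> < \<delta>" using gd by simp
        have IH: "r |` {x. x < \<delta>} \<in> P \<delta>" using less.IH[OF db _ gd'] db less.prems(1) by simp
        have e1: "(r |` {x. x < \<beta>'}) |` {x. x < \<delta>} = r |` {x. x < \<delta>}"
        proof -
          have "{x. x < \<beta>'} \<inter> {x. x < \<delta>} = {x. x < \<delta>}" using db by auto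
          then show ?thesis by simp
        qed
        have e2: "(r |` {x. x < \<beta>'}) \<delta> = (q |` {x. x < \<beta>'}) \<delta>" using False rq by (simp add: restrict_map_def)
        show ?thesis
        proof (cases "even_ord \<delta>")
          case True
          have "\<delta> \<in> dom (q |` {x. x < \<beta>'}) \<longrightarrow> (\<exists>c. (q |` {x. x < \<beta>'}) \<delta> = Some (Cohen c) \<and> finite (dom c))"
            using P_even[OF da True 2] q' by blast
          then show ?thesis using P_even[OF da True 2, of "r |` {x. x < \<beta>'}"] domr' e1 e2 IH rq[OF False]
            by (simp add: domIff)
        next
          case ev: False
          then have od: "odd_ord \<delta>" unfolding odd_ord_def .
          have qc: "\<delta> \<in> dom (q |` {x. x < \<beta>'}) \<longrightarrow> (\<exists>m. (q |` {x. x < \<beta>'}) \<delta> = Some (Club m)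
                    \<and> nice_name (Pc P \<delta>) lec {\<xi>. \<xi> < om2} m
                    \<and> forces (Pc P \<delta>) lec (cbs om2 m) Map.empty
                    \<and> forces (P \<delta>) (leq P) (disjoint_fm (embname m) (S \<delta>)) ((q |` {x. x < \<beta>'}) |` {x. x < \<delta>}))"
            using P_odd[OF da od 2] q' by blast
          have e3: "(q |` {x. x < \<beta>'}) |` {x. x < \<delta>} = q |` {x. x < \<delta>}"
          proof -
            have "{x. x < \<beta>'} \<inter> {x. x < \<delta>} = {x. x < \<delta>}" using db by auto
            then show ?thesis by simp
          qed
          have sub: "q |` {x. x < \<delta>} \<subseteq>\<^sub>m r |` {x. x < \<delta>}"
            unfolding map_le_def using a(5) rq by (auto simp: restrict_map_def split: if_splits; metis option.distinct(1))
          have ls: "\<forall>t\<in>P \<delta>. leq P t (r |` {x. x < \<delta>}) \<longrightarrow> leq P t (q |` {x. x < \<delta>})"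
            using leq_sub[OF sub] by (intro ballI impI)
          have tr: "forces (P \<delta>) (leq P) (disjoint_fm m (S \<delta>)) (r |` {x. x < \<delta>})"
            if h: "forces (P \<delta>) (leq P) (disjoint_fm m (S \<delta>)) (q |` {x. x < \<delta>})" for m
            by (rule disj_transfer[OF h ls])
          have "\<delta> \<in> dom (r |` {x. x < \<beta>'}) \<longrightarrow> (\<exists>m. (r |` {x. x < \<beta>'}) \<delta> = Some (Club m)
                    \<and> nice_name (Pc P \<delta>) lec {\<xi>. \<xi> < om2} m
                    \<and> forces (Pc P \<delta>) lec (cbs om2 m) Map.empty
                    \<and> forces (P \<delta>) (leq P) (disjoint_fm (embname m) (S \<delta>)) ((r |` {x. x < \<beta>'}) |` {x. x < \<delta>}))"
            using qc e1 e2 e3 tr rq[OF False] by (simp add: domIff) blast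
          then show ?thesis using P_odd[OF da od 2, of "r |` {x. x < \<beta>'}"] domr' e1 IH by simp
        qed
      qed
    next
      case 3
      have ql: "dom (q |` {x. x < \<beta>'}) \<subseteq> {x. x < \<beta>'}" "finite (dom (q |` {x. x < \<beta>'}) \<inter> {x. even_ord x})"
        "(card_of (dom (q |` {x. x < \<beta>'}) \<inter> {x. odd_ord x}), card_of {\<eta>. \<eta> < om2}) \<in> ordLess"
        using P_lim[OF ba 3, of "q |` {x. x < \<beta>'}"] q' by auto
      have dr: "dom (r |` {x. x < \<beta>'}) = insert \<gamma> (dom (q |` {x. x < \<beta>'}))"
        using less.prems(2) domr by auto
      have "dom (r |` {x. x < \<beta>'}) \<subseteq> {x. x < \<beta>'}" by auto
      moreover have "finite (dom (r |` {x. x < \<beta>'}) \<inter> {x. even_ord x})"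
      proof -
        have "dom (r |` {x. x < \<beta>'}) \<inter> {x. even_ord x} = dom (q |` {x. x < \<beta>'}) \<inter> {x. even_ord x}"
          using dr a(4) unfolding odd_ord_def by auto
        then show ?thesis using ql(2) by simp
      qed
      moreover have "(card_of (dom (r |` {x. x < \<beta>'}) \<inter> {x. odd_ord x}), card_of {\<eta>. \<eta> < om2}) \<in> ordLess"
      proof -
        have "dom (r |` {x. x < \<beta>'}) \<inter> {x. odd_ord x} = insert \<gamma> (dom (q |` {x. x < \<beta>'}) \<inter> {x. odd_ord x})"
          using dr a(4) by auto
        then show ?thesis using insert_less_inf[OF inf2 ql(3)] by simp
      qed
      moreover have "\<forall>\<beta>''. \<beta>'' < \<beta>' \<longrightarrow> (r |` {x. x < \<beta>'}) |` {x. x < \<beta>''} \<in> P \<beta>''"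
      proof (intro allI impI)
        fix \<beta>'' assume b: "\<beta>'' < \<beta>'"
        have e: "(r |` {x. x < \<beta>'}) |` {x. x < \<beta>''} = r |` {x. x < \<beta>''}"
        proof -
          have "{x. x < \<beta>'} \<inter> {x. x < \<beta>''} = {x. x < \<beta>''}" using b by auto
          then show ?thesis by simp
        qed
        show "(r |` {x. x < \<beta>'}) |` {x. x < \<beta>''} \<in> P \<beta>''"
        proof (cases "\<gamma> < \<beta>''")
          case True
          then show ?thesis using less.IH[OF b] b less.prems(1) e by simp
        next
          case False
          then have "r |` {x. x < \<beta>''} = q |` {x. x < \<beta>''}" unfolding r_def by (intro restr_upd_notin) simp
          moreover have "q |` {x. x < \<beta>''} \<in> P \<beta>''" using restr_P[OF a(1,2)] b less.prems(1) by simp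
          ultimately show ?thesis using e by simp
        qed
      qed
      ultimately show ?thesis using P_lim[OF ba 3, of "r |` {x. x < \<beta>'}"] by blast
    qed
  qed
  have "r |` {x. x < \<beta>} \<in> P \<beta>" using main a(3) by simp
  moreover have "dom r \<subseteq> {x. x < \<beta>}" using domr dom_sub[OF a(1,2)] a(3) by auto
  ultimately show ?thesis using restr_dom r_def by metis
qed

end

lemma cbs_chk: "chk Map.empty (cbs om2 (chkn a))"
  by (simp add: cbs_def Imp_def Ex_def chkn_def)

lemma cbs_evl:
  fixes a :: "'o::wellorder"
  assumes "a < x" "x < om2"
  shows "evl (cbs om2 (chkn a))"
proof -
  have lim: "\<not> (is_limit \<delta> \<and> (\<forall>\<zeta><\<delta>. a < \<delta> \<and> \<zeta> \<le> a))" for \<delta>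
  proof
    assume h: "is_limit \<delta> \<and> (\<forall>\<zeta><\<delta>. a < \<delta> \<and> \<zeta> \<le> a)"
    then obtain \<eta> where "\<eta> < \<delta>" unfolding is_limit_def by blast
    then have ad: "a < \<delta>" using h by blast
    then obtain y where "a < y" "y < \<delta>" using h unfolding is_limit_def lim0_def by blast
    then show False using h by (meson not_le)
  qed
  show ?thesis using assms lim
    by (simp add: cbs_def Imp_def Ex_def chkn_def) (meson order.strict_trans le_less)
qed

context suit
begin

lemma empty_Pc: "\<gamma> \<le> \<alpha> \<Longrightarrow> Map.empty \<in> Pc P \<gamma>"
  using empty_P[of \<gamma>] by (simp add: Pc_def emb_def)

lemma nice_chkn: "\<gamma> \<le> \<alpha> \<Longrightarrow> a < om2 \<Longrightarrow> nice_name (Pc P \<gamma>) lec {\<xi>. \<xi> < om2} (chkn a)"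
  using empty_Pc[of \<gamma>] by (auto simp: nice_name_def antichain_def chkn_def)

lemma disj_chkn:
  assumes "\<gamma> < \<alpha>" "odd_ord \<gamma>" "\<not> cof_omega a"
  shows "forces (P \<gamma>) (leq P) (disjoint_fm (embname (chkn a)) (S \<gamma>)) t"
  unfolding disjoint_fm_def forces.simps(5) forces.simps(3)
proof (intro allI ballI impI notI)
  fix \<xi> r assume r: "r \<in> P \<gamma>" "leq P r t"
    and h0: "forces (P \<gamma>) (leq P) (Conj (Mem \<xi> (embname (chkn a))) (Mem \<xi> (S \<gamma>))) r"
  have h: "forces (P \<gamma>) (leq P) (Mem \<xi> (embname (chkn a))) r \<and> forces (P \<gamma>) (leq P) (Mem \<xi> (S \<gamma>)) r"
    using h0 by (simp only: forces.simps(4))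
  have "embname (chkn a) \<xi> \<noteq> {}" using forces_Mem_nonempty[OF conjunct1[OF h] r(1) leq_refl] .
  then have xa: "\<xi> = a" by (simp add: embname_def chkn_def split: if_splits)
  have "S \<gamma> \<xi> \<noteq> {}" using forces_Mem_nonempty[OF conjunct2[OF h] r(1) leq_refl] .
  then have "cof_omega \<xi>" using S_nice[OF assms(1,2)] unfolding nice_name_def by blast
  then show False using xa assms(3) by simp
qed

end

theorem lemma2p8:
  fixes om2 om3 \<alpha> \<beta> :: "'o::wellorder"
    and P :: "'o \<Rightarrow> 'o cond set"
    and S :: "'o \<Rightarrow> 'o \<Rightarrow> 'o cond set"
    and p q :: "'o cond"
  assumes "is_omega2 om2" and "is_omega3 om3"
    and "\<alpha> < om3"
    and "suitable om2 \<alpha> P S"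
    and "\<beta> \<le> \<alpha>"
    and "p \<in> P \<beta>" and "q \<in> P \<beta>"
    and "leqstar_s P \<beta> q p"
  shows "evres p = evres q
         \<and> dom p \<subseteq> dom q
         \<and> (\<forall>\<gamma>\<in>dom p. odd_ord \<gamma> \<longrightarrow>
              forces (Pc P \<gamma>) lec (Disj (endext (nm p \<gamma>) (nm q \<gamma>)) (endext (nm q \<gamma>) (nm p \<gamma>)))
                     (cres p \<gamma>))"
proof -
  note as = assms
  have inf2: "infinite {\<eta>. \<eta> < om2}" using om2_infinite[OF assms(1)] .
  interpret suit om2 \<alpha> P S using assms(4) inf2 by unfold_locales
  have ls: "\<forall>r. leqstar P \<beta> r q \<longrightarrow> compat_star P \<beta> r p" using assms(8) unfolding leqstar_s_def by blast
  have "leqstar P \<beta> q q" using assms(7) by (simp add: leqstar_def leqb_def leq_refl)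
  then obtain s0 where s0: "s0 \<in> P \<beta>" "leqstar P \<beta> s0 q" "leqstar P \<beta> s0 p"
    using ls unfolding compat_star_def by blast
  have ev: "evres p = evres q" using s0 unfolding leqstar_def by simp
  have crs0: "cres s0 \<gamma> = cres p \<gamma>" for \<gamma> using s0(3) cres_evres unfolding leqstar_def by blast
  have lsp: "leq P s0 p" and lsq: "leq P s0 q" using s0 unfolding leqstar_def leqb_def by auto
  have dpq: "dom p \<subseteq> dom q"
  proof
    fix \<gamma> assume gp: "\<gamma> \<in> dom p"
    show "\<gamma> \<in> dom q"
    proof (rule ccontr)
      assume gq: "\<gamma> \<notin> dom q"
      have od: "odd_ord \<gamma>"
      proof (rule ccontr)
        assume "\<not> odd_ord \<gamma>"
        then have e: "even_ord \<gamma>" unfolding odd_ord_def by simp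
        have "evres p \<gamma> = p \<gamma>" "evres q \<gamma> = q \<gamma>" using evres_apply[OF e] by auto
        then show False using ev gp gq by (metis domIff)
      qed
      have gb: "\<gamma> < \<beta>" using dom_sub[OF assms(5,6)] gp by blast
      then have ga: "\<gamma> < \<alpha>" using assms(5) by simp
      have step: "\<exists>s. forces (Pc P \<gamma>) lec (endext (chkn a) (nm s \<gamma>)) (cres p \<gamma>) \<and>
                     forces (Pc P \<gamma>) lec (endext (nm p \<gamma>) (nm s \<gamma>)) (cres p \<gamma>)"
        if ax: "a < x" "x < om2" "\<not> cof_omega a" for a x
      proof -
        define r where "r = q(\<gamma> \<mapsto> Club (chkn a))"
        have ao: "a < om2" using ax by simp
        have c1: "nice_name (Pc P \<gamma>) lec {\<xi>. \<xi> < om2} (chkn a)" using nice_chkn[OF _ ao] ga by simp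
        have c2: "forces (Pc P \<gamma>) lec (cbs om2 (chkn a)) Map.empty"
          using forces_chk[OF cbs_chk empty_Pc] cbs_evl[OF ax(1,2)] ga by simp
        have c3: "forces (P \<gamma>) (leq P) (disjoint_fm (embname (chkn a)) (S \<gamma>)) (q |` {x. x < \<gamma>})"
          by (rule disj_chkn[OF ga od ax(3)])
        have rP: "r \<in> P \<beta>" unfolding r_def by (rule ext_P[OF assms(5,7) gb od gq c1 c2 c3])
        have "leq P r q" unfolding leq_def
        proof (intro conjI ballI impI)
          show "dom q \<subseteq> dom r" by (auto simp: r_def)
        next
          fix \<gamma>' assume "\<gamma>' \<in> dom q" "even_ord \<gamma>'"
          then have "\<gamma>' \<noteq> \<gamma>" using gq by blast
          then show "coh q \<gamma>' \<subseteq>\<^sub>m coh r \<gamma>'" by (simp add: r_def coh_def)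
        next
          fix \<gamma>' assume "\<gamma>' \<in> dom q" "odd_ord \<gamma>'"
          then have "\<gamma>' \<noteq> \<gamma>" using gq by blast
          then have "nm r \<gamma>' = nm q \<gamma>'" by (simp add: r_def nm_def)
          then show "forces (Pc P \<gamma>') lec (endext (nm q \<gamma>') (nm r \<gamma>')) (cres r \<gamma>')"
            by (simp add: forces_endext_refl)
        qed
        moreover have "evres r = evres q" unfolding r_def by (rule evres_upd_odd[OF od])
        ultimately have "leqstar P \<beta> r q" using rP assms(7) by (simp add: leqstar_def leqb_def)
        then obtain s where s: "s \<in> P \<beta>" "leqstar P \<beta> s r" "leqstar P \<beta> s p"
          using ls unfolding compat_star_def by blast
        have cs: "cres s \<gamma> = cres p \<gamma>" using s(3) cres_evres unfolding leqstar_def by blast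
        have l1: "leq P s r" and l2: "leq P s p" using s unfolding leqstar_def leqb_def by auto
        have "\<gamma> \<in> dom r" by (simp add: r_def)
        then have "forces (Pc P \<gamma>) lec (endext (nm r \<gamma>) (nm s \<gamma>)) (cres s \<gamma>)" using l1 od unfolding leq_def by blast
        moreover have "nm r \<gamma> = chkn a" by (simp add: r_def nm_def)
        moreover have "forces (Pc P \<gamma>) lec (endext (nm p \<gamma>) (nm s \<gamma>)) (cres s \<gamma>)" using l2 od gp unfolding leq_def by blast
        ultimately show ?thesis using cs by auto
      qed
      define a0 :: 'o where "a0 = (LEAST x. True)"
      define a1 :: 'o where "a1 = (LEAST x. a0 < x)"
      have "infinite ({\<eta>. \<eta> < om2} - {a0, a1})" using inf2 by simp
      then have "{\<eta>. \<eta> < om2} - {a0, a1} \<noteq> {}" by (metis finite.emptyI)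
      then obtain x where x: "x < om2" "x \<noteq> a0" "x \<noteq> a1" by blast
      have a0le: "a0 \<le> y" for y unfolding a0_def by (rule Least_le) simp
      have a0x: "a0 < x" using a0le[of x] x(2) by simp
      have a01: "a0 < a1" unfolding a1_def by (rule LeastI[of _ x]) (rule a0x)
      have a1x: "a1 < x" using Least_le[of "\<lambda>y. a0 < y" x] a0x x(3) unfolding a1_def[symmetric] by simp
      have nc0: "\<not> cof_omega a0"
        unfolding cof_omega_def using a0le not_le by blast
      have nc1: "\<not> cof_omega a1"
      proof
        assume "cof_omega a1"
        then obtain f :: "nat \<Rightarrow> 'o" where f: "strict_mono f" "\<forall>n. f n < a1" unfolding cof_omega_def by blast
        have "f 0 < f 1" using f(1) by (simp add: strict_mono_def)
        then have "a0 < f 1" using a0le[of "f 0"] by simp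
        then have "a1 \<le> f 1" unfolding a1_def by (rule Least_le)
        then show False using f(2) not_le by blast
      qed
      obtain s_0 where S0: "forces (Pc P \<gamma>) lec (endext (chkn a0) (nm s_0 \<gamma>)) (cres p \<gamma>)"
          "forces (Pc P \<gamma>) lec (endext (nm p \<gamma>) (nm s_0 \<gamma>)) (cres p \<gamma>)"
        using step[OF a0x x(1) nc0] by blast
      obtain s_1 where S1: "forces (Pc P \<gamma>) lec (endext (chkn a1) (nm s_1 \<gamma>)) (cres p \<gamma>)"
          "forces (Pc P \<gamma>) lec (endext (nm p \<gamma>) (nm s_1 \<gamma>)) (cres p \<gamma>)"
        using step[OF a1x x(1) nc1] by blast
      have cP: "cres p \<gamma> \<in> Pc P \<gamma>" using cres_Pc[OF assms(5,6)] gb by simp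
      obtain n where n: "p \<gamma> = Some (Club n)" "forces (Pc P \<gamma>) lec (cbs om2 n) Map.empty"
        using club_P[OF assms(5,6) gp od] by blast
      have "forces (Pc P \<gamma>) lec (Ex (\<lambda>\<xi>. Mem \<xi> n)) Map.empty"
        using n(2) unfolding cbs_def by (simp only: forces.simps(4))
      then have ne: "forces (Pc P \<gamma>) lec (Ex (\<lambda>\<xi>. Mem \<xi> (nm p \<gamma>))) (cres p \<gamma>)"
        using forces_mono[OF _ lec_empty] n(1) by (simp add: nm_def)
      have "a1 \<noteq> a0" using a01 by simp
      then show False using K[OF cP ne S1(2) S1(1) S0(2) S0(1)] by blast
    qed
  qed
  have part3: "forces (Pc P \<gamma>) lec (Disj (endext (nm p \<gamma>) (nm q \<gamma>)) (endext (nm q \<gamma>) (nm p \<gamma>))) (cres p \<gamma>)"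
    if g: "\<gamma> \<in> dom p" "odd_ord \<gamma>" for \<gamma>
  proof -
    have gb: "\<gamma> < \<beta>" using dom_sub[OF assms(5,6)] g(1) by blast
    have cP: "cres p \<gamma> \<in> Pc P \<gamma>" using cres_Pc[OF assms(5,6)] gb by simp
    have e1: "forces (Pc P \<gamma>) lec (endext (nm p \<gamma>) (nm s0 \<gamma>)) (cres p \<gamma>)"
      using lsp g crs0[of \<gamma>] unfolding leq_def by auto
    have gq: "\<gamma> \<in> dom q" using dpq g(1) by blast
    have e2: "forces (Pc P \<gamma>) lec (endext (nm q \<gamma>) (nm s0 \<gamma>)) (cres p \<gamma>)"
      using lsq g(2) gq crs0[of \<gamma>] unfolding leq_def by auto
    show ?thesis by (rule disj_key[OF cP e1 e2])
  qed
  show ?thesis using ev dpq part3 by blast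
qed

end
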